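(* Let $G=(V,E)$ be a graph with $n$ vertices and maximum degree $\Delta$, and let $c>0$ be a constant determining the threshold $\tau=(c+1)\log n$. The randomized variant of Procedure Edge-Coloring with parameter $h\le\log\Delta-2$ computes a proper $(\Delta+3\cdot 2^h)$-edge-coloring of $G$ with probability at least $1-\frac{1}{n^{c}}$.
   Context: Logarithms are base 2. A proper $k$-edge-coloring is a map $\varphi:E\to\{1,\dots,k\}$ with distinct colors on distinct edges sharing an endpoint. A degree-splitting of $H$ with discrepancy $\kappa$ is a partition $(E_1,E_2)$ of $E(H)$ with $|\deg_{E_1}(v)-\deg_{E_2}(v)|\le\kappa$ for all $v$. Procedure Edge-Coloring$(H,h)$: if $h=0$, return a $(\Delta(H)+1)$-edge-coloring of $H$ with palette $\{1,\dots,\Delta(H)+1\}$ computed by a base-case subroutine. Otherwise compute a degree-splitting $(E_1,E_2)$ of $H$ with discrepancy at most 2 and $\{|E_1|,|E_2|\}=\{\lfloor |E(H)|/2\rfloor,\lceil |E(H)|/2\rceil\}$; let $H_1=(V(H),E_1)$, $H_2=(V(H),E_2)$ with isolated vertices discarded; compute $\varphi_1=$ Edge-Coloring$(H_1,h-1)$, $\varphi_2=$ Edge-Coloring$(H_2,h-1)$; return $\varphi=\varphi_1$ on $E_1$ and $\varphi=p_1+\varphi_2$ on $E_2$, where $p_1$ is the palette size of $\varphi_1$. Randomized variant: in the base case, for an input with $n'$ vertices, $m'$ edges and maximum degree $\Delta'$, if $n'\ge\tau$ a randomized algorithm is used that outputs a proper $(\Delta'+1)$-edge-coloring with probability at least $1-\Delta'^{-n'}$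 (in $O(\Delta'^{18}n')$ time); otherwise a deterministic algorithm is used that always outputs a proper $(\Delta'+1)$-edge-coloring (in $O(m'\Delta'\log n')$ time). *)

theory Defs
  imports "HOL-Probability.Probability_Mass_Function"
begin

text \<open>Graphs: an edge set is a set of 2-element vertex sets. The vertex set of a
  subgraph H (with isolated vertices discarded) is the union of its edges.\<close>

definition deg :: "'a set set \<Rightarrow> 'a \<Rightarrow> nat" where
  "deg F v = card {e \<in> F. v \<in> e}"

definition maxdeg :: "'a set set \<Rightarrow> nat" where
  "maxdeg F = Max ({deg F v | v. v \<in> \<Union>F} \<union> {0})"

definition proper_edge_coloring :: "'a set set \<Rightarrow> ('a set \<Rightarrow> nat) \<Rightarrow> nat \<Rightarrow> bool" where
  "proper_edge_coloring F \<phi> k \<longleftrightarrow>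
     (\<forall>e\<in>F. \<phi> e \<in> {1..k}) \<and>
     (\<forall>e\<in>F. \<forall>e'\<in>F. e \<noteq> e' \<and> e \<inter> e' \<noteq> {} \<longrightarrow> \<phi> e \<noteq> \<phi> e')"

definition degree_splitting :: "'a set set \<Rightarrow> 'a set set \<Rightarrow> nat \<Rightarrow> bool" where
  "degree_splitting F E1 \<kappa> \<longleftrightarrow> E1 \<subseteq> F \<and>
     (\<forall>v. \<bar>int (deg E1 v) - int (deg (F - E1) v)\<bar> \<le> int \<kappa>)"

fun palette :: "('a set set \<Rightarrow> 'a set set) \<Rightarrow> 'a set set \<Rightarrow> nat \<Rightarrow> nat" where
  "palette split F 0 = maxdeg F + 1"
| "palette split F (Suc h) = palette split (split F) h + palette split (F - split F) h"

text \<open>Randomized variant of Procedure Edge-Coloring, as a distribution over colorings.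
  rand: randomized base-case algorithm; detalg: deterministic base-case algorithm;
  tau: threshold on the number of (non-isolated) vertices.\<close>
fun edge_coloring ::
  "('a set set \<Rightarrow> 'a set set) \<Rightarrow> ('a set set \<Rightarrow> ('a set \<Rightarrow> nat) pmf) \<Rightarrow>
   ('a set set \<Rightarrow> ('a set \<Rightarrow> nat)) \<Rightarrow> real \<Rightarrow> 'a set set \<Rightarrow> nat \<Rightarrow> ('a set \<Rightarrow> nat) pmf" where
  "edge_coloring split rand detalg \<tau> F 0 =
     (if real (card (\<Union>F)) \<ge> \<tau> then rand F else return_pmf (detalg F))"
| "edge_coloring split rand detalg \<tau> F (Suc h) =
     bind_pmf (edge_coloring split rand detalg \<tau> (split F) h) (\<lambda>\<phi>1.
     bind_pmf (edge_coloring split rand detalg \<tau> (F - split F) h) (\<lambda>\<phi>2.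
     return_pmf (\<lambda>e. if e \<in> split F then \<phi>1 e else palette split (split F) h + \<phi>2 e)))"

end

theory Submission
  imports Defs
begin

lemma bind_bound:
  fixes p :: "'a pmf" and f :: "'a \<Rightarrow> 'b pmf"
  assumes h1: "measure_pmf.prob p {x. P x} \<ge> 1 - a"
    and h2: "\<And>x. P x \<Longrightarrow> measure_pmf.prob (f x) A \<ge> 1 - b" and b0: "0 \<le> b"
  shows "measure_pmf.prob (bind_pmf p f) A \<ge> 1 - a - b"
proof (cases "b \<le> 1")
  case False
  have "measure_pmf.prob p {x. P x} \<le> 1" by simp
  then have "a \<ge> 0" using h1 by linarith
  then show ?thesis using False measure_nonneg[of "bind_pmf p f" A] by linarith
next
  case True
  have a0: "a \<ge> 0" using h1 measure_pmf.prob_le_1[of p "{x. P x}"] by linarith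
  have "ennreal ((1-b) * measure_pmf.prob p {x. P x}) = (\<integral>\<^sup>+x. ennreal(1-b) * indicator {x. P x} x \<partial>p)"
    using True by (simp add: nn_integral_cmult_indicator measure_pmf.emeasure_eq_measure ennreal_mult)
  also have "\<dots> \<le> (\<integral>\<^sup>+x. emeasure (f x) A \<partial>p)"
    using h2 by (intro nn_integral_mono) (auto split: split_indicator simp: measure_pmf.emeasure_eq_measure)
  also have "\<dots> = ennreal (measure_pmf.prob (bind_pmf p f) A)"
    by (simp add: measure_pmf.emeasure_eq_measure[symmetric])
  finally have le: "(1-b) * measure_pmf.prob p {x. P x} \<le> measure_pmf.prob (bind_pmf p f) A"
    by (simp add: ennreal_le_iff)
  have "(1-b) * (1-a) \<le> (1-b) * measure_pmf.prob p {x. P x}"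
    using h1 True by (intro mult_left_mono) auto
  moreover have "1 - a - b \<le> (1-b)*(1-a)" using a0 b0 by (simp add: algebra_simps)
  ultimately show ?thesis using le by linarith
qed

lemma deg_split:
  assumes "finite F" "E1 \<subseteq> F"
  shows "deg F v = deg E1 v + deg (F - E1) v"
proof -
  have "{e\<in>F. v\<in>e} = {e\<in>E1. v\<in>e} \<union> {e\<in>F-E1. v\<in>e}" using assms by auto
  moreover have "{e\<in>E1. v\<in>e} \<inter> {e\<in>F-E1. v\<in>e} = {}" by auto
  moreover have "finite {e\<in>E1. v\<in>e}" by (rule finite_subset[of _ F]) (use assms in auto)
  moreover have "finite {e\<in>F-E1. v\<in>e}" by (rule finite_subset[of _ F]) (use assms in auto)
  ultimately show ?thesis unfolding deg_def by (simp add: card_Un_disjoint)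
qed

lemma deg_le_maxdeg:
  assumes "finite (\<Union>F)"
  shows "deg F v \<le> maxdeg F"
proof (cases "v \<in> \<Union>F")
  case True
  have eq: "{deg F v | v. v \<in> \<Union>F} = deg F ` \<Union>F" by auto
  have fin: "finite ({deg F v | v. v \<in> \<Union>F} \<union> {0})" unfolding eq using assms by auto
  show ?thesis unfolding maxdeg_def using True by (intro Max_ge[OF fin]) auto
next
  case False
  then have "{e\<in>F. v\<in>e} = {}" by auto
  then show ?thesis unfolding deg_def by (metis card.empty zero_le)
qed

lemma maxdeg_cases:
  assumes "finite (\<Union>F)"
  shows "maxdeg F = 0 \<or> (\<exists>v. maxdeg F = deg F v)"
proof -
  have eq: "{deg F v | v. v \<in> \<Union>F} = deg F ` \<Union>F" by auto
  have fin: "finite ({deg F v | v. v \<in> \<Union>F} \<union> {0})" unfolding eq using assms by auto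
  have "maxdeg F \<in> {deg F v | v. v \<in> \<Union>F} \<union> {0}"
    unfolding maxdeg_def by (rule Max_in[OF fin]) auto
  then show ?thesis by auto
qed

lemma maxdeg_le:
  assumes "finite (\<Union>F)" "\<And>v. deg F v \<le> k"
  shows "maxdeg F \<le> k"
  using maxdeg_cases[OF assms(1)] assms(2) by auto

lemma proper_mono:
  "proper_edge_coloring F \<phi> k \<Longrightarrow> k \<le> k' \<Longrightarrow> proper_edge_coloring F \<phi> k'"
  unfolding proper_edge_coloring_def by auto

lemma proper_combine:
  assumes A: "proper_edge_coloring E1 \<phi>1 p1" and B: "proper_edge_coloring (F - E1) \<phi>2 p2"
  shows "proper_edge_coloring F (\<lambda>e. if e \<in> E1 then \<phi>1 e else p1 + \<phi>2 e) (p1 + p2)"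
proof -
  have a1: "\<And>e. e \<in> E1 \<Longrightarrow> 1 \<le> \<phi>1 e \<and> \<phi>1 e \<le> p1" using A unfolding proper_edge_coloring_def by auto
  have a2: "\<And>e e'. e \<in> E1 \<Longrightarrow> e' \<in> E1 \<Longrightarrow> e \<noteq> e' \<Longrightarrow> e \<inter> e' \<noteq> {} \<Longrightarrow> \<phi>1 e \<noteq> \<phi>1 e'"
    using A unfolding proper_edge_coloring_def by blast
  have b1: "\<And>e. e \<in> F - E1 \<Longrightarrow> 1 \<le> \<phi>2 e \<and> \<phi>2 e \<le> p2" using B unfolding proper_edge_coloring_def by auto
  have b2: "\<And>e e'. e \<in> F - E1 \<Longrightarrow> e' \<in> F - E1 \<Longrightarrow> e \<noteq> e' \<Longrightarrow> e \<inter> e' \<noteq> {} \<Longrightarrow> \<phi>2 e \<noteq> \<phi>2 e'"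
    using B unfolding proper_edge_coloring_def by blast
  show ?thesis unfolding proper_edge_coloring_def
  proof (intro conjI ballI impI)
    fix e assume "e \<in> F"
    then show "(if e \<in> E1 then \<phi>1 e else p1 + \<phi>2 e) \<in> {1..p1 + p2}"
      using a1[of e] b1[of e] by auto
  next
    fix e e' assume "e \<in> F" "e' \<in> F" "e \<noteq> e' \<and> e \<inter> e' \<noteq> {}"
    then show "(if e \<in> E1 then \<phi>1 e else p1 + \<phi>2 e) \<noteq> (if e' \<in> E1 then \<phi>1 e' else p1 + \<phi>2 e')"
    proof (cases "e \<in> E1"; cases "e' \<in> E1")
      assume "e \<in> E1" "e' \<in> E1" then show ?thesis using a2[of e e'] \<open>e \<noteq> e' \<and> e \<inter> e' \<noteq> {}\<close> by simp
    next
      assume "e \<in> E1" "e' \<notin> E1" then show ?thesis using a1[of e] b1[of e'] \<open>e' \<in> F\<close> by simp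
    next
      assume "e \<notin> E1" "e' \<in> E1" then show ?thesis using a1[of e'] b1[of e] \<open>e \<in> F\<close> by simp
    next
      assume "e \<notin> E1" "e' \<notin> E1" then show ?thesis
        using b2[of e e'] \<open>e \<in> F\<close> \<open>e' \<in> F\<close> \<open>e \<noteq> e' \<and> e \<inter> e' \<noteq> {}\<close> by simp
    qed
  qed
qed

lemma split_facts:
  assumes finF: "finite F" and ds: "degree_splitting F E1 2"
  shows "E1 \<subseteq> F" "2*deg E1 v \<le> deg F v + 2" "2*deg (F - E1) v \<le> deg F v + 2"
    "deg F v \<le> 2*deg E1 v + 2" "deg F v \<le> 2*deg (F - E1) v + 2"
proof -
  show sub: "E1 \<subseteq> F" using ds unfolding degree_splitting_def by auto
  have d: "deg F v = deg E1 v + deg (F - E1) v" by (rule deg_split[OF finF sub])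
  have "\<bar>int (deg E1 v) - int (deg (F - E1) v)\<bar> \<le> 2"
    using ds unfolding degree_splitting_def by auto
  then show "2*deg E1 v \<le> deg F v + 2" "2*deg (F - E1) v \<le> deg F v + 2"
    "deg F v \<le> 2*deg E1 v + 2" "deg F v \<le> 2*deg (F - E1) v + 2"
    using d by linarith+
qed

lemma maxdeg_half:
  assumes finF: "finite F" "finite (\<Union>F)" and sub: "F' \<subseteq> F"
    and h: "\<And>v. 2 * deg F' v \<le> deg F v + 2"
  shows "2 * maxdeg F' \<le> maxdeg F + 2"
proof -
  have "\<Union>F' \<subseteq> \<Union>F" using sub by (rule Union_mono)
  then have fF': "finite (\<Union>F')" using finF(2) by (rule finite_subset)
  consider "maxdeg F' = 0" | w where "maxdeg F' = deg F' w" using maxdeg_cases[OF fF'] by auto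
  then show ?thesis
  proof cases
    case 2
    then show ?thesis using h[of w] deg_le_maxdeg[OF finF(2), of w] by linarith
  qed simp
qed

lemma palette_bound:
  assumes finE: "finite E" "finite (\<Union>E)" and sp: "\<forall>F\<subseteq>E. degree_splitting F (split F) 2"
  shows "F \<subseteq> E \<Longrightarrow> palette split F h + 2 \<le> maxdeg F + 3*2^h"
proof (induction h arbitrary: F)
  case 0
  then show ?case by simp
next
  case (Suc h)
  have finF1: "finite F" using Suc.prems finE(1) by (rule finite_subset)
  have "\<Union>F \<subseteq> \<Union>E" using Suc.prems by (rule Union_mono)
  then have finF2: "finite (\<Union>F)" using finE(2) by (rule finite_subset)
  note finF = finF1 finF2
  have ds: "degree_splitting F (split F) 2" using sp Suc.prems by blast
  note sf = split_facts[OF finF(1) ds]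
  have s1: "split F \<subseteq> E" "F - split F \<subseteq> E" using sf(1) Suc.prems by auto
  have m1: "2 * maxdeg (split F) \<le> maxdeg F + 2"
    by (rule maxdeg_half[OF finF sf(1)]) (rule sf(2))
  have m2: "2 * maxdeg (F - split F) \<le> maxdeg F + 2"
    using maxdeg_half[OF finF, of "F - split F"] sf(3) by blast
  show ?case using Suc.IH[OF s1(1)] Suc.IH[OF s1(2)] m1 m2 by simp
qed

lemma main_prob:
  fixes \<tau> B :: real
  assumes finE: "finite E" "finite (\<Union>E)"
    and sp: "\<forall>F\<subseteq>E. degree_splitting F (split F) 2"
    and det_ok: "\<forall>F\<subseteq>E. proper_edge_coloring F (detalg F) (maxdeg F + 1)"
    and rand_ok: "\<forall>F\<subseteq>E. measure_pmf.prob (rand F) {\<phi>. proper_edge_coloring F \<phi> (maxdeg F + 1)}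
        \<ge> 1 - 1 / real (maxdeg F) ^ card (\<Union>F)"
    and leaf: "\<And>F. F \<subseteq> E \<Longrightarrow> 2 \<le> maxdeg F \<Longrightarrow> \<tau> \<le> real (card (\<Union>F)) \<Longrightarrow>
        1 / real (maxdeg F) ^ card (\<Union>F) \<le> B"
    and B0: "0 \<le> B"
  shows "F \<subseteq> E \<Longrightarrow> 4 * 2^h \<le> real (deg F vz) + 2 \<Longrightarrow>
    1 - 2^h * B \<le> measure_pmf.prob (edge_coloring split rand detalg \<tau> F h)
        {\<phi>. proper_edge_coloring F \<phi> (palette split F h)}"
proof (induction h arbitrary: F)
  case 0
  have "\<Union>F \<subseteq> \<Union>E" using 0(1) by (rule Union_mono)
  then have finF2: "finite (\<Union>F)" using finE(2) by (rule finite_subset)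
  have "2 \<le> deg F vz" using 0(2) by simp
  then have md: "2 \<le> maxdeg F" using deg_le_maxdeg[OF finF2, of vz] by linarith
  show ?case
  proof (cases "\<tau> \<le> real (card (\<Union>F))")
    case True
    have r: "1 - 1 / real (maxdeg F) ^ card (\<Union>F) \<le> measure_pmf.prob (rand F) {\<phi>. proper_edge_coloring F \<phi> (maxdeg F + 1)}"
      using rand_ok 0(1) by blast
    have eq: "edge_coloring split rand detalg \<tau> F 0 = rand F" using True by simp
    show ?thesis unfolding eq palette.simps power_0 mult_1 using r leaf[OF 0(1) md True] by linarith
  next
    case False
    have "proper_edge_coloring F (detalg F) (maxdeg F + 1)" using det_ok 0(1) by blast
    then show ?thesis using False B0 by simp
  qed
next
  case (Suc h)
  have finF1: "finite F" using Suc.prems(1) finE(1) by (rule finite_subset)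
  have ds: "degree_splitting F (split F) 2" using sp Suc.prems(1) by blast
  note sf = split_facts[OF finF1 ds]
  have s1: "split F \<subseteq> E" "F - split F \<subseteq> E" using sf(1) Suc.prems(1) by auto
  have d1: "4 * 2^h \<le> real (deg (split F) vz) + 2"
    using Suc.prems(2) sf(4)[of vz] by simp
  have d2: "4 * 2^h \<le> real (deg (F - split F) vz) + 2"
    using Suc.prems(2) sf(5)[of vz] by simp
  note IH1 = Suc.IH[OF s1(1) d1] and IH2 = Suc.IH[OF s1(2) d2]
  let ?A = "{\<phi>. proper_edge_coloring F \<phi> (palette split F (Suc h))}"
  have "1 - 2^h * B - 2^h * B \<le> measure_pmf.prob
     (bind_pmf (edge_coloring split rand detalg \<tau> (split F) h) (\<lambda>\<phi>1.
     bind_pmf (edge_coloring split rand detalg \<tau> (F - split F) h) (\<lambda>\<phi>2.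
     return_pmf (\<lambda>e. if e \<in> split F then \<phi>1 e else palette split (split F) h + \<phi>2 e)))) ?A"
  proof (rule bind_bound[where P="\<lambda>\<phi>1. proper_edge_coloring (split F) \<phi>1 (palette split (split F) h)"])
    show "1 - 2^h * B \<le> measure_pmf.prob (edge_coloring split rand detalg \<tau> (split F) h)
        {x. proper_edge_coloring (split F) x (palette split (split F) h)}" using IH1 by simp
    show "0 \<le> 2^h * B" using B0 by simp
    fix \<phi>1 assume p1: "proper_edge_coloring (split F) \<phi>1 (palette split (split F) h)"
    have "1 - 2^h * B - 0 \<le> measure_pmf.prob (bind_pmf (edge_coloring split rand detalg \<tau> (F - split F) h) (\<lambda>\<phi>2.
     return_pmf (\<lambda>e. if e \<in> split F then \<phi>1 e else palette split (split F) h + \<phi>2 e))) ?A"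
    proof (rule bind_bound[where P="\<lambda>\<phi>2. proper_edge_coloring (F - split F) \<phi>2 (palette split (F - split F) h)"])
      show "1 - 2^h * B \<le> measure_pmf.prob (edge_coloring split rand detalg \<tau> (F - split F) h)
        {x. proper_edge_coloring (F - split F) x (palette split (F - split F) h)}" using IH2 by simp
      fix \<phi>2 assume p2: "proper_edge_coloring (F - split F) \<phi>2 (palette split (F - split F) h)"
      have "proper_edge_coloring F (\<lambda>e. if e \<in> split F then \<phi>1 e else palette split (split F) h + \<phi>2 e)
          (palette split F (Suc h))"
        using proper_combine[OF p1 p2] by simp
      then show "1 - 0 \<le> measure_pmf.prob (return_pmf (\<lambda>e. if e \<in> split F then \<phi>1 e else palette split (split F) h + \<phi>2 e)) ?A"
        by simp
    qed simp
    then show "1 - 2^h * B \<le> measure_pmf.prob (bind_pmf (edge_coloring split rand detalg \<tau> (F - split F) h) (\<lambda>\<phi>2.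
     return_pmf (\<lambda>e. if e \<in> split F then \<phi>1 e else palette split (split F) h + \<phi>2 e))) ?A" by simp
  qed
  then show ?case by (simp add: mult_ac)
qed

lemma deg_le_card:
  assumes finV: "finite V" and graph: "\<forall>e\<in>E. e \<subseteq> V \<and> card e = 2"
  shows "deg E v \<le> card V"
proof -
  have inj: "inj_on (\<lambda>e. e - {v}) {e\<in>E. v\<in>e}"
  proof (rule inj_onI)
    fix x y assume "x \<in> {e\<in>E. v\<in>e}" "y \<in> {e\<in>E. v\<in>e}" "x - {v} = y - {v}"
    then show "x = y" by (metis (no_types, lifting) insert_Diff mem_Collect_eq)
  qed
  have img: "(\<lambda>e. e - {v}) ` {e\<in>E. v\<in>e} \<subseteq> (\<lambda>u. {u}) ` V"
  proof
    fix x assume "x \<in> (\<lambda>e. e - {v}) ` {e\<in>E. v\<in>e}"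
    then obtain e where e: "e \<in> E" "v \<in> e" "x = e - {v}" by auto
    have "card e = 2" "e \<subseteq> V" using graph e(1) by auto
    have "finite e" using \<open>e \<subseteq> V\<close> finV by (rule finite_subset)
    then have "card x = 1" using e \<open>card e = 2\<close> by simp
    then obtain u where "x = {u}" by (rule card_1_singletonE)
    moreover have "u \<in> V" using \<open>x = {u}\<close> e \<open>e \<subseteq> V\<close> by auto
    ultimately show "x \<in> (\<lambda>u. {u}) ` V" by auto
  qed
  have "deg E v = card ((\<lambda>e. e - {v}) ` {e\<in>E. v\<in>e})"
    unfolding deg_def using card_image[OF inj] by simp
  also have "\<dots> \<le> card ((\<lambda>u. {u}) ` V)" using img finV by (intro card_mono) auto
  also have "\<dots> \<le> card V" by (rule card_image_le[OF finV])
  finally show ?thesis .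
qed

theorem claim3p7:
  fixes V :: "'a set" and E :: "'a set set" and c :: real and h :: nat
    and split :: "'a set set \<Rightarrow> 'a set set"
    and rand :: "'a set set \<Rightarrow> ('a set \<Rightarrow> nat) pmf"
    and detalg :: "'a set set \<Rightarrow> ('a set \<Rightarrow> nat)"
  assumes finV: "finite V"
    and graph: "\<forall>e\<in>E. e \<subseteq> V \<and> card e = 2"
    and c_pos: "c > 0"
    and h_bound: "real h \<le> log 2 (real (maxdeg E)) - 2"
    and split_ok: "\<forall>F\<subseteq>E. degree_splitting F (split F) 2 \<and>
        card (split F) \<in> {card F div 2, (card F + 1) div 2}"
    and det_ok: "\<forall>F\<subseteq>E. proper_edge_coloring F (detalg F) (maxdeg F + 1)"
    and rand_ok: "\<forall>F\<subseteq>E. measure_pmf.prob (rand F) {\<phi>. proper_edge_coloring F \<phi> (maxdeg F + 1)}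
        \<ge> 1 - 1 / real (maxdeg F) ^ card (\<Union>F)"
  shows "measure_pmf.prob
           (edge_coloring split rand detalg ((c + 1) * log 2 (real (card V))) E h)
           {\<phi>. proper_edge_coloring E \<phi> (maxdeg E + 3 * 2 ^ h)}
         \<ge> 1 - 1 / real (card V) powr c"
proof -
  have "E \<subseteq> Pow V" using graph by auto
  moreover have "finite (Pow V)" using finV by simp
  ultimately have finE1: "finite E" by (rule finite_subset)
  have "\<Union>E \<subseteq> V" using graph by auto
  then have finE2: "finite (\<Union>E)" using finV by (rule finite_subset)
  define n where "n = card V"
  define D where "D = maxdeg E"
  have Dpos: "D > 0"
  proof (rule ccontr)
    assume "\<not> D > 0"
    then have "D = 0" by simp
    then show False using h_bound unfolding D_def by (simp add: log_def)
  qed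
  have "real h + 2 \<le> log 2 (real D)" using h_bound unfolding D_def by simp
  then have "2 powr (real h + 2) \<le> real D" using Dpos by (subst (asm) le_log_iff) auto
  moreover have "2 powr (real h + 2) = 2^h * 4"
    by (simp add: powr_add powr_realpow)
  ultimately have hD: "2^h * 4 \<le> real D" by simp
  obtain v0 where v0: "D = deg E v0" using maxdeg_cases[OF finE2] Dpos unfolding D_def by auto
  have Dn: "D \<le> n" using deg_le_card[OF finV graph, of v0] v0 unfolding n_def by simp
  have npos: "real n > 0" using hD Dn by (smt (verit) of_nat_le_iff two_realpow_ge_one)
  have hn: "2^h \<le> real n" using hD Dn by (smt (verit) of_nat_le_iff two_realpow_ge_one)
  define B where "B = 1 / real n powr (c + 1)"
  have B0: "0 \<le> B" unfolding B_def by simp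
  have leaf: "1 / real (maxdeg F) ^ card (\<Union>F) \<le> B"
    if "F \<subseteq> E" "2 \<le> maxdeg F" "(c + 1) * log 2 (real (card V)) \<le> real (card (\<Union>F))" for F
  proof -
    have "real n powr (c + 1) = (2 powr log 2 (real n)) powr (c + 1)" using npos by simp
    also have "\<dots> = 2 powr ((c + 1) * log 2 (real n))" by (simp add: powr_powr mult.commute)
    also have "\<dots> \<le> 2 powr real (card (\<Union>F))" using that(3) unfolding n_def by (intro powr_mono) auto
    also have "\<dots> = 2 ^ card (\<Union>F)" by (simp add: powr_realpow)
    also have "\<dots> \<le> real (maxdeg F) ^ card (\<Union>F)" using that(2) by (intro power_mono) auto
    finally have le: "real n powr (c + 1) \<le> real (maxdeg F) ^ card (\<Union>F)" .
    have "0 < real n powr (c + 1)" using npos by simp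
    moreover have "0 < real (maxdeg F) ^ card (\<Union>F)" using that(2) by simp
    ultimately show ?thesis unfolding B_def using le by (intro divide_left_mono) (auto intro: mult_pos_pos)
  qed
  have sp: "\<forall>F\<subseteq>E. degree_splitting F (split F) 2" using split_ok by blast
  have main: "1 - 2^h * B \<le> measure_pmf.prob (edge_coloring split rand detalg ((c + 1) * log 2 (real (card V))) E h)
        {\<phi>. proper_edge_coloring E \<phi> (palette split E h)}"
    by (rule main_prob[where F=E and vz=v0, OF finE1 finE2 sp det_ok rand_ok leaf B0]) (use hD v0 in auto)
  have "2^h * B \<le> real n * B" using hn B0 by (intro mult_right_mono) auto
  also have "real n * B = 1 / real n powr c"
    unfolding B_def using npos by (simp add: powr_add)
  finally have bB: "2^h * B \<le> 1 / real (card V) powr c" unfolding n_def .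
  have pb: "palette split E h \<le> maxdeg E + 3 * 2^h"
    using palette_bound[OF finE1 finE2 sp, of E h] by simp
  have "measure_pmf.prob (edge_coloring split rand detalg ((c + 1) * log 2 (real (card V))) E h)
        {\<phi>. proper_edge_coloring E \<phi> (palette split E h)} \<le>
      measure_pmf.prob (edge_coloring split rand detalg ((c + 1) * log 2 (real (card V))) E h)
           {\<phi>. proper_edge_coloring E \<phi> (maxdeg E + 3 * 2 ^ h)}"
    using pb by (intro measure_pmf.finite_measure_mono) (auto intro: proper_mono)
  then show ?thesis using main bB by linarith
qed

end
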